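(* Let $\varphi$ be an individually rational rule. Then $\varphi$ is pick-an-object implementable in perfect ex-post equilibrium if and only if $\varphi$ is strategy-proof and satisfies monotonic discoverability. Moreover, for every rule that is pick-an-object implementable in perfect ex-post equilibrium, straightforward strategies constitute a perfect ex-post equilibrium profile of every pick-an-object mechanism that sequentializes that rule.
   Context: Let $A=\{a_1,\dots,a_n\}$ be a finite set of agents and $O=\{o_1,\dots,o_m\}\cup\{\emptyset\}$ a finite set of object types ($\emptyset$ the null object). Each agent $a$ has a strict preference $P_a$ over $O$ with weak version $R_a$. $\mathbb{P}$ is the set of strict preferences over $O$, $\mathcal{P}=\mathbb{P}^n$ the set of profiles; $P_{-a}$ denotes the preferences of agents other than $a$. An allocation is a function $\mu:A\to O$. A rule is $\varphi:\mathcal{P}\to\{\text{allocations}\}$, $\varphi_a(P)=\varphi(P)(a)$. $\varphi$ is individually rational if $\varphi_a(P)R_a\emptyset$ always; strategy-proof if $\varphi_a(P_a,P_{-a})\,R_a\,\varphi_a(P'_a,P_{-a})$ for all $a$, $P$, $P'_a\in\mathbb{P}$. Monotonic discoverability: for $P\in\mathcal{P}$ and allocation $\mu$, $\mathcal{L}(P,\mu)$ is the set of profiles $P'$ such that for every agent $a$, $P'_a$ agrees with $P_a$ on $\mu(a)$ and on all objects $P_a$ ranks above $\mu(a)$ (same set above $\mu(a)$, same order), possibly differing below. $\varphi$ satisfies monotonic discoverability if for every $\mu$ and $P$, either $\varphi(P)=\mu$ or some agent $a^*$ has $\varphi_{a^*}(P')\neq\mu(a^* )$ for all $P'\in\mathcal{L}(P,\mu)$.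 Pick-an-object (PAO) mechanisms: a choice history is a finite (possibly empty) sequence $((\Omega_1,\omega_1),\dots,(\Omega_k,\omega_k))$ with $\Omega_j\subseteq O$, $\omega_j\in\Omega_j$; $\omega_k$ is its last choice. A collective history is an $n$-tuple of choice histories; $h^{A-\emptyset}$ is the tuple of empty ones. A menu function $\mathbb{S}$ maps collective histories to $n$-tuples of subsets of $O$ such that the menus in $\mathbb{S}(h^{A-\emptyset})$ are non-empty and, for other collective histories, agent $i$'s menu is a subset of $\Omega_k\setminus\{\omega_k\}$, where $(\Omega_k,\omega_k)$ is the last entry of $i$'s history. The PAO mechanism $\mathbb{S}$: in period 1 every agent chooses from her initial menu; in each later period, given the current collective history $h^A$, if all menus in $\mathbb{S}(h^A)$ are empty the procedure stops and each agent receives her last chosen object, otherwise each agent with a non-empty menu chooses an element of it; each (menu, choice) is appended to the chooser's history. $H^A_{\mathbb{S}}$ is the set of collective histories that can arise; $H^A_{\mathbb{S}}(a)$ the set of agent $a$'s individual histories within them. The straightforward strategy w.r.t. $P_a$ chooses the $P_a$-best element of every menu. $\mathbb{S}$ sequentializes $\varphi$ if, for every $P$, when all agents play straightforward strategies w.r.t. $P$ the outcome is $\varphi(P)$. Strategies and equilibrium: a strategy for agent $a$ maps each pair $(h,\Omega)$ of an own history $h\in H^A_{\mathbb{S}}(a)\cup\{\emptyset\}$ and a menu $\Omega$ to an element of $\Omega$ (so that the extended history is in $H^A_{\mathbb{S}}(a)$). A type-strategy $\Sigma_a$ maps each preference to a strategy. For $h^A\in H^A_{\mathbb{S}}\cup\{h^{A-\emptyset}\}$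 and strategy profile $\sigma$, $\mathcal{O}|_{h^A}(\sigma)$ is the allocation produced by running $\mathbb{S}$ from $h^A$ with agents following $\sigma$, and $\mathcal{O}_a|_{h^A}(\sigma)$ is agent $a$'s assignment. A type-strategy profile $(\Sigma_a)_{a\in A}$ is a perfect ex-post equilibrium if for every $a\in A$, $h^A\in H^A_{\mathbb{S}}\cup\{h^{A-\emptyset}\}$, strategy $\sigma'_a$, and $P\in\mathcal{P}$: $\mathcal{O}_a|_{h^A}(\Sigma_a(P_a),(\Sigma_{a'}(P_{a'}))_{a'\neq a})\ R_a\ \mathcal{O}_a|_{h^A}(\sigma'_a,(\Sigma_{a'}(P_{a'}))_{a'\neq a})$. A rule $\varphi$ is pick-an-object implementable in perfect ex-post equilibrium if some PAO mechanism sequentializes $\varphi$ and, in it, the profile in which each agent of type $P_a$ plays the straightforward strategy w.r.t. $P_a$ is a perfect ex-post equilibrium. *)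

theory Defs
  imports Main
begin

text \<open>Objects: the type 'o option; None is the null object. A strict preference
is a strict linear order P on the object set, P x y meaning x strictly preferred to y.\<close>

type_synonym 'x pref = "'x \<Rightarrow> 'x \<Rightarrow> bool"

definition strict_pref :: "'x pref \<Rightarrow> bool" where
  "strict_pref P \<longleftrightarrow> (\<forall>x. \<not> P x x) \<and> (\<forall>x y z. P x y \<longrightarrow> P y z \<longrightarrow> P x z)
     \<and> (\<forall>x y. x \<noteq> y \<longrightarrow> P x y \<or> P y x)"

definition weak :: "'x pref \<Rightarrow> 'x \<Rightarrow> 'x \<Rightarrow> bool" where
  "weak P x y \<longleftrightarrow> x = y \<or> P x y"

definition profile :: "('a \<Rightarrow> 'x pref) \<Rightarrow> bool" where
  "profile P \<longleftrightarrow> (\<forall>a. strict_pref (P a))"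

type_synonym ('a, 'o) rule = "('a \<Rightarrow> 'o option pref) \<Rightarrow> 'a \<Rightarrow> 'o option"

definition individually_rational :: "('a, 'o) rule \<Rightarrow> bool" where
  "individually_rational \<phi> \<longleftrightarrow> (\<forall>P. profile P \<longrightarrow> (\<forall>a. weak (P a) (\<phi> P a) None))"

definition strategy_proof :: "('a, 'o) rule \<Rightarrow> bool" where
  "strategy_proof \<phi> \<longleftrightarrow> (\<forall>P a Pa'. profile P \<longrightarrow> strict_pref Pa' \<longrightarrow>
      weak (P a) (\<phi> P a) (\<phi> (P(a := Pa')) a))"

definition agrees_above :: "'x pref \<Rightarrow> 'x \<Rightarrow> 'x pref \<Rightarrow> bool" where
  "agrees_above P x P' \<longleftrightarrow> {y. P' y x} = {y. P y x} \<and>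
     (\<forall>y z. y \<in> insert x {w. P w x} \<longrightarrow> z \<in> insert x {w. P w x} \<longrightarrow> (P' y z \<longleftrightarrow> P y z))"

definition lower_set :: "('a \<Rightarrow> 'x pref) \<Rightarrow> ('a \<Rightarrow> 'x) \<Rightarrow> ('a \<Rightarrow> 'x pref) set" where
  "lower_set P \<mu> = {P'. profile P' \<and> (\<forall>a. agrees_above (P a) (\<mu> a) (P' a))}"

definition monotonic_discoverability :: "('a, 'o) rule \<Rightarrow> bool" where
  "monotonic_discoverability \<phi> \<longleftrightarrow> (\<forall>\<mu> P. profile P \<longrightarrow>
      \<phi> P = \<mu> \<or> (\<exists>a. \<forall>P' \<in> lower_set P \<mu>. \<phi> P' a \<noteq> \<mu> a))"

type_synonym 'x chist = "('x set \<times> 'x) list"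
type_synonym ('a, 'x) chistA = "'a \<Rightarrow> 'x chist"
type_synonym ('a, 'x) menufun = "('a, 'x) chistA \<Rightarrow> 'a \<Rightarrow> 'x set"
type_synonym 'x strategy = "'x chist \<Rightarrow> 'x set \<Rightarrow> 'x"

definition valid_chist :: "'x chist \<Rightarrow> bool" where
  "valid_chist hs \<longleftrightarrow> (\<forall>p \<in> set hs. snd p \<in> fst p)"

definition empty_hist :: "('a, 'x) chistA" where
  "empty_hist = (\<lambda>_. [])"

definition pao :: "('a, 'x) menufun \<Rightarrow> bool" where
  "pao S \<longleftrightarrow> (\<forall>a. S empty_hist a \<noteq> {}) \<and>
     (\<forall>h. h \<noteq> empty_hist \<longrightarrow> (\<forall>a. valid_chist (h a)) \<longrightarrow>
        (\<forall>a. h a \<noteq> [] \<longrightarrow> S h a \<subseteq> fst (last (h a)) - {snd (last (h a))}))"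

definition all_empty :: "('a, 'x) menufun \<Rightarrow> ('a, 'x) chistA \<Rightarrow> bool" where
  "all_empty S h \<longleftrightarrow> (\<forall>a. S h a = {})"

inductive reach :: "('a, 'x) menufun \<Rightarrow> ('a, 'x) chistA \<Rightarrow> bool" for S where
  init: "reach S empty_hist"
| move: "reach S h \<Longrightarrow> \<not> all_empty S h \<Longrightarrow> (\<forall>a. S h a \<noteq> {} \<longrightarrow> c a \<in> S h a) \<Longrightarrow>
     reach S (\<lambda>a. if S h a = {} then h a else h a @ [(S h a, c a)])"

definition step :: "('a, 'x) menufun \<Rightarrow> ('a \<Rightarrow> 'x strategy) \<Rightarrow> ('a, 'x) chistA \<Rightarrow> ('a, 'x) chistA" where
  "step S \<sigma> h = (\<lambda>a. if S h a = {} then h a else h a @ [(S h a, \<sigma> a (h a) (S h a))])"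

inductive outcome_rel :: "('a, 'x) menufun \<Rightarrow> ('a \<Rightarrow> 'x strategy) \<Rightarrow> ('a, 'x) chistA \<Rightarrow> ('a \<Rightarrow> 'x) \<Rightarrow> bool"
  for S \<sigma> where
  stop: "all_empty S h \<Longrightarrow> outcome_rel S \<sigma> h (\<lambda>a. snd (last (h a)))"
| go: "\<not> all_empty S h \<Longrightarrow> outcome_rel S \<sigma> (step S \<sigma> h) \<mu> \<Longrightarrow> outcome_rel S \<sigma> h \<mu>"

definition outcome :: "('a, 'x) menufun \<Rightarrow> ('a \<Rightarrow> 'x strategy) \<Rightarrow> ('a, 'x) chistA \<Rightarrow> 'a \<Rightarrow> 'x" where
  "outcome S \<sigma> h = (THE \<mu>. outcome_rel S \<sigma> h \<mu>)"

definition valid_strategy :: "'x strategy \<Rightarrow> bool" where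
  "valid_strategy \<sigma> \<longleftrightarrow> (\<forall>h \<Omega>. \<Omega> \<noteq> {} \<longrightarrow> \<sigma> h \<Omega> \<in> \<Omega>)"

definition best :: "'x pref \<Rightarrow> 'x set \<Rightarrow> 'x" where
  "best P \<Omega> = (THE x. x \<in> \<Omega> \<and> (\<forall>y \<in> \<Omega>. y \<noteq> x \<longrightarrow> P x y))"

definition straightforward :: "'x pref \<Rightarrow> 'x strategy" where
  "straightforward P = (\<lambda>h \<Omega>. best P \<Omega>)"

definition sequentializes :: "('a, 'o option) menufun \<Rightarrow> ('a, 'o) rule \<Rightarrow> bool" where
  "sequentializes S \<phi> \<longleftrightarrow> (\<forall>P. profile P \<longrightarrow>
      outcome S (\<lambda>a. straightforward (P a)) empty_hist = \<phi> P)"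

definition perfect_ex_post_eq :: "('a, 'o option) menufun \<Rightarrow> ('a \<Rightarrow> 'o option pref \<Rightarrow> 'o option strategy) \<Rightarrow> bool" where
  "perfect_ex_post_eq S \<Sigma> \<longleftrightarrow> (\<forall>a h \<sigma>' P. reach S h \<longrightarrow> valid_strategy \<sigma>' \<longrightarrow> profile P \<longrightarrow>
      weak (P a) (outcome S (\<lambda>b. \<Sigma> b (P b)) h a)
                 (outcome S ((\<lambda>b. \<Sigma> b (P b))(a := \<sigma>')) h a))"

definition pao_implementable_pepe :: "('a, 'o) rule \<Rightarrow> bool" where
  "pao_implementable_pepe \<phi> \<longleftrightarrow> (\<exists>S :: ('a, 'o option) menufun. pao S \<and> sequentializes S \<phi> \<and>
      perfect_ex_post_eq S (\<lambda>a. straightforward))"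

end

theory Submission
  imports Defs
begin


lemma sp_irrefl: "strict_pref P \<Longrightarrow> \<not> P x x" by (simp add: strict_pref_def)
lemma sp_trans: "strict_pref P \<Longrightarrow> P x y \<Longrightarrow> P y z \<Longrightarrow> P x z" unfolding strict_pref_def by blast
lemma sp_total: "strict_pref P \<Longrightarrow> x \<noteq> y \<Longrightarrow> P x y \<or> P y x" unfolding strict_pref_def by blast
lemma sp_asym: "strict_pref P \<Longrightarrow> P x y \<Longrightarrow> \<not> P y x" unfolding strict_pref_def by blast

lemma best_eqI: assumes "strict_pref P" "x \<in> \<Omega>" "\<forall>y\<in>\<Omega>. y \<noteq> x \<longrightarrow> P x y"
  shows "best P \<Omega> = x"
  unfolding best_def
proof (rule the_equality)
  show "x \<in> \<Omega> \<and> (\<forall>y\<in>\<Omega>. y \<noteq> x \<longrightarrow> P x y)" using assms by blast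
  fix z assume z: "z \<in> \<Omega> \<and> (\<forall>y\<in>\<Omega>. y \<noteq> z \<longrightarrow> P z y)"
  show "z = x"
  proof (rule ccontr)
    assume "z \<noteq> x"
    then have "P z x" "P x z" using z assms by auto
    then show False using sp_asym[OF assms(1)] by blast
  qed
qed

lemma max_exists: assumes "strict_pref P" "finite \<Omega>" "\<Omega> \<noteq> {}"
  shows "\<exists>x\<in>\<Omega>. \<forall>y\<in>\<Omega>. y \<noteq> x \<longrightarrow> P x y"
  using assms(2,3)
proof (induction \<Omega> rule: finite_ne_induct)
  case (singleton x) then show ?case by auto
next
  case (insert z F)
  then obtain x where x: "x \<in> F" "\<forall>y\<in>F. y \<noteq> x \<longrightarrow> P x y" by blast
  show ?case
  proof (cases "P x z")
    case True then show ?thesis using x by auto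
  next
    case False
    then have "P z x" using sp_total[OF assms(1), of x z] insert(3) x(1) by auto
    have "\<forall>y\<in>insert z F. y \<noteq> z \<longrightarrow> P z y"
    proof (intro ballI impI)
      fix y assume "y \<in> insert z F" "y \<noteq> z"
      then have "y \<in> F" by auto
      then show "P z y" using x \<open>P z x\<close> sp_trans[OF assms(1)] by (cases "y = x") auto
    qed
    then show ?thesis by blast
  qed
qed

lemma best_in: assumes "strict_pref P" "finite \<Omega>" "\<Omega> \<noteq> {}"
  shows "best P \<Omega> \<in> \<Omega>" "\<forall>y\<in>\<Omega>. y \<noteq> best P \<Omega> \<longrightarrow> P (best P \<Omega>) y"
proof -
  obtain x where "x\<in>\<Omega>" "\<forall>y\<in>\<Omega>. y \<noteq> x \<longrightarrow> P x y" using max_exists[OF assms] by blast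
  moreover then have "best P \<Omega> = x" using best_eqI[OF assms(1)] by blast
  ultimately show "best P \<Omega> \<in> \<Omega>" "\<forall>y\<in>\<Omega>. y \<noteq> best P \<Omega> \<longrightarrow> P (best P \<Omega>) y" by auto
qed

lemma best_cong: "(\<And>x y. x \<in> \<Omega> \<Longrightarrow> y \<in> \<Omega> \<Longrightarrow> P x y = Q x y) \<Longrightarrow> best P \<Omega> = best Q \<Omega>"
  unfolding best_def by (rule arg_cong[where f=The]) (auto intro!: ext)

lemma best_agree:
  assumes sP: "strict_pref P" and sP': "strict_pref P'" and ag: "agrees_above P m P'"
    and fin: "finite \<Omega>" and ex: "\<exists>y\<in>\<Omega>. y = m \<or> P y m"
  shows "best P' \<Omega> = best P \<Omega>"
proof -
  have ne: "\<Omega> \<noteq> {}" using ex by auto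
  define b where "b = best P \<Omega>"
  have b: "b \<in> \<Omega>" "\<forall>y\<in>\<Omega>. y \<noteq> b \<longrightarrow> P b y" using best_in[OF sP fin ne] b_def by auto
  have bm: "b = m \<or> P b m" using ex b sp_trans[OF sP] by metis
  have up: "{y. P' y m} = {y. P y m}" and ord: "\<And>y z. y \<in> insert m {w. P w m} \<Longrightarrow> z \<in> insert m {w. P w m} \<Longrightarrow> P' y z = P y z"
    using ag unfolding agrees_above_def by auto
  have "\<forall>z\<in>\<Omega>. z \<noteq> b \<longrightarrow> P' b z"
  proof (intro ballI impI)
    fix z assume z: "z \<in> \<Omega>" "z \<noteq> b"
    then have Pbz: "P b z" using b by auto
    show "P' b z"
    proof (cases "z \<in> insert m {w. P w m}")
      case True then show ?thesis using ord[of b z] bm Pbz by auto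
    next
      case False
      then have "\<not> P' z m" "z \<noteq> m" using up by auto
      then have "P' m z" using sp_total[OF sP'] by blast
      moreover have "b = m \<or> P' b m" using bm ord[of b m] by auto
      ultimately show ?thesis using sp_trans[OF sP'] by blast
    qed
  qed
  then show ?thesis using best_eqI[OF sP' b(1)] b_def by simp
qed



definition avail :: "'x chist \<Rightarrow> 'x set" where
  "avail hs = (if hs = [] then UNIV else fst (last hs) - {snd (last hs)})"

definition finalc :: "('a, 'x) chistA \<Rightarrow> 'a \<Rightarrow> 'x" where
  "finalc h = (\<lambda>a. snd (last (h a)))"

fun hchain :: "'x chist \<Rightarrow> bool" where
  "hchain [] = True"
| "hchain ((\<Omega>, c) # r) = (c \<in> \<Omega> \<and> (\<forall>e\<in>set r. c \<notin> fst e) \<and> hchain r)"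

fun liftp :: "'x list \<Rightarrow> 'x pref \<Rightarrow> 'x pref" where
  "liftp [] P = P"
| "liftp (c # cs) P = (\<lambda>x y. (x = c \<and> y \<noteq> c) \<or> (x \<noteq> c \<and> y \<noteq> c \<and> liftp cs P x y))"

definition validp :: "('a \<Rightarrow> 'x strategy) \<Rightarrow> bool" where
  "validp \<sigma> \<longleftrightarrow> (\<forall>b. valid_strategy (\<sigma> b))"

lemma hchain_append: "hchain (hs @ [(\<Omega>, c)]) \<longleftrightarrow> hchain hs \<and> c \<in> \<Omega> \<and> (\<forall>e\<in>set hs. snd e \<notin> \<Omega>)"
  by (induction hs rule: hchain.induct) auto

lemma hchain_valid: "hchain hs \<Longrightarrow> valid_chist hs"
  unfolding valid_chist_def by (induction hs rule: hchain.induct) auto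

lemma avail_disj: "hchain hs \<Longrightarrow> e \<in> set hs \<Longrightarrow> snd e \<notin> avail hs"
proof (induction hs rule: hchain.induct)
  case 1 then show ?case by simp
next
  case (2 \<Omega> c r)
  show ?case
  proof (cases "r = []")
    case True then show ?thesis using 2 by (auto simp: avail_def)
  next
    case False
    then have av: "avail ((\<Omega>, c) # r) = avail r" by (simp add: avail_def)
    show ?thesis
    proof (cases "e = (\<Omega>, c)")
      case True
      have "last r \<in> set r" using False by simp
      then show ?thesis using 2 True av False by (auto simp: avail_def)
    next
      case False
      then show ?thesis using 2 av by auto
    qed
  qed
qed

lemma avail_disj': "hchain hs \<Longrightarrow> x \<in> set (map snd hs) \<Longrightarrow> x \<notin> avail hs"
  using avail_disj by fastforce

lemma avail_append: "avail (hs @ [(\<Omega>, c)]) = \<Omega> - {c}"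
  by (simp add: avail_def)

lemma liftp_strict: "strict_pref P \<Longrightarrow> strict_pref (liftp cs P)"
proof (induction cs)
  case Nil then show ?case by simp
next
  case (Cons c cs)
  then have s: "strict_pref (liftp cs P)" by simp
  have i: "\<not> liftp (c#cs) P x x" for x using sp_irrefl[OF s] by simp
  have t: "liftp (c#cs) P x y \<Longrightarrow> liftp (c#cs) P y z \<Longrightarrow> liftp (c#cs) P x z" for x y z
    using sp_trans[OF s, of x y z] by auto
  have o: "x \<noteq> y \<Longrightarrow> liftp (c#cs) P x y \<or> liftp (c#cs) P y x" for x y
    using sp_total[OF s, of x y] by auto
  show ?case unfolding strict_pref_def using i t o by blast
qed

lemma liftp_disj: "x \<notin> set cs \<Longrightarrow> y \<notin> set cs \<Longrightarrow> liftp cs P x y = P x y"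
  by (induction cs) auto

lemma liftp_best_disj: assumes "\<Omega> \<inter> set cs = {}" shows "best (liftp cs P) \<Omega> = best P \<Omega>"
proof (rule best_cong)
  fix x y assume "x \<in> \<Omega>" "y \<in> \<Omega>"
  then show "liftp cs P x y = P x y" using assms by (intro liftp_disj) auto
qed

lemma liftp_consistent: "strict_pref P \<Longrightarrow> hchain hs \<Longrightarrow> e \<in> set hs \<Longrightarrow> best (liftp (map snd hs) P) (fst e) = snd e"
proof (induction hs arbitrary: e rule: hchain.induct)
  case 1 then show ?case by simp
next
  case (2 \<Omega> c r)
  show ?case
  proof (cases "e = (\<Omega>, c)")
    case True
    have "best (liftp (map snd ((\<Omega>, c) # r)) P) \<Omega> = c"
      by (rule best_eqI[OF liftp_strict[OF 2(2)]]) (use 2 in auto)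
    then show ?thesis using True by simp
  next
    case False
    then have e: "e \<in> set r" using 2 by auto
    then have "c \<notin> fst e" using 2 by auto
    then have "best (liftp (map snd ((\<Omega>, c) # r)) P) (fst e) = best (liftp (map snd r) P) (fst e)"
      by (intro best_cong) auto
    then show ?thesis using 2 e by auto
  qed
qed

lemma straightforward_valid: "strict_pref (P :: ('x::finite) pref) \<Longrightarrow> valid_strategy (straightforward P)"
  unfolding valid_strategy_def straightforward_def using best_in(1)[of P] by simp

lemma straightforward_validp: "profile (P :: 'a \<Rightarrow> ('x::finite) pref) \<Longrightarrow> validp (\<lambda>b. straightforward (P b))"
  unfolding validp_def profile_def using straightforward_valid by metis

lemma reach_step: "reach S h \<Longrightarrow> \<not> all_empty S h \<Longrightarrow> validp \<sigma> \<Longrightarrow> reach S (step S \<sigma> h)"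
  unfolding step_def
  by (rule reach.move[where c="\<lambda>b. \<sigma> b (h b) (S h b)"]) (auto simp: validp_def valid_strategy_def)

lemma reach_inv: assumes "pao S" shows "reach S h \<Longrightarrow> (h = empty_hist \<or> (\<forall>b. h b \<noteq> [])) \<and> (\<forall>b. hchain (h b))"
proof (induction rule: reach.induct)
  case init then show ?case by (simp add: empty_hist_def)
next
  case (move h c)
  have sub: "S h b \<subseteq> avail (h b)" for b
  proof (cases "h = empty_hist")
    case True then show ?thesis by (simp add: avail_def empty_hist_def)
  next
    case False
    then have "h b \<noteq> []" "\<forall>b. valid_chist (h b)" using move hchain_valid by blast+
    then show ?thesis using assms False unfolding pao_def avail_def by auto
  qed
  have ne: "\<forall>b. (\<lambda>a. if S h a = {} then h a else h a @ [(S h a, c a)]) b \<noteq> []"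
  proof
    fix b
    show "(\<lambda>a. if S h a = {} then h a else h a @ [(S h a, c a)]) b \<noteq> []"
    proof (cases "h = empty_hist")
      case True then have "S h b \<noteq> {}" using assms by (simp add: pao_def)
      then show ?thesis by simp
    next
      case False then show ?thesis using move by auto
    qed
  qed
  have ch: "hchain ((\<lambda>a. if S h a = {} then h a else h a @ [(S h a, c a)]) b)" for b
  proof (cases "S h b = {}")
    case True then show ?thesis using move by simp
  next
    case False
    have "\<forall>e\<in>set (h b). snd e \<notin> S h b" using avail_disj[of "h b"] move sub[of b] by blast
    then show ?thesis using False move by (simp add: hchain_append)
  qed
  show ?case using ne ch by blast
qed

lemma menu_avail: assumes "pao S" "reach S h" shows "S h b \<subseteq> avail (h b)"
proof (cases "h = empty_hist")
  case True then show ?thesis by (simp add: avail_def empty_hist_def)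
next
  case False
  then have "h b \<noteq> []" "\<forall>b. valid_chist (h b)" using reach_inv[OF assms] hchain_valid by auto
  then show ?thesis using assms False unfolding pao_def avail_def by auto
qed

inductive runs :: "('a, 'x) menufun \<Rightarrow> ('a \<Rightarrow> 'x strategy) \<Rightarrow> ('a, 'x) chistA \<Rightarrow> ('a, 'x) chistA \<Rightarrow> bool"
  for S \<sigma> where
  rstop: "all_empty S h \<Longrightarrow> runs S \<sigma> h h"
| rgo: "\<not> all_empty S h \<Longrightarrow> runs S \<sigma> (step S \<sigma> h) hf \<Longrightarrow> runs S \<sigma> h hf"

lemma runs_outcome_rel: "runs S \<sigma> h hf \<Longrightarrow> outcome_rel S \<sigma> h (finalc hf)"
  by (induction rule: runs.induct) (auto simp: finalc_def intro: outcome_rel.intros)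

lemma outcome_rel_det: "outcome_rel S \<sigma> h \<mu> \<Longrightarrow> outcome_rel S \<sigma> h \<mu>' \<Longrightarrow> \<mu>' = \<mu>"
proof (induction arbitrary: \<mu>' rule: outcome_rel.induct)
  case (stop h) from stop(2) show ?case by (cases rule: outcome_rel.cases) (use stop in auto)
next
  case (go h \<mu>)
  have IH: "\<And>x. outcome_rel S \<sigma> (step S \<sigma> h) x \<Longrightarrow> x = \<mu>" by (rule go.IH)
  from go(4) show ?case
  proof (cases rule: outcome_rel.cases)
    case stop then show ?thesis using go(1) by simp
  next
    case go then show ?thesis using IH by blast
  qed
qed

lemma runs_outcome: "runs S \<sigma> h hf \<Longrightarrow> outcome S \<sigma> h = finalc hf"
  unfolding outcome_def using runs_outcome_rel outcome_rel_det by (metis the_equality)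

lemma runs_det: "runs S \<sigma> h hf \<Longrightarrow> runs S \<sigma> h hf' \<Longrightarrow> hf' = hf"
proof (induction arbitrary: hf' rule: runs.induct)
  case (rstop h) from rstop(2) show ?case by (cases rule: runs.cases) (use rstop in auto)
next
  case (rgo h hf)
  have IH: "\<And>x. runs S \<sigma> (step S \<sigma> h) x \<Longrightarrow> x = hf" by (rule rgo.IH)
  from rgo(4) show ?case
  proof (cases rule: runs.cases)
    case rstop then show ?thesis using rgo(1) by simp
  next
    case rgo then show ?thesis using IH by blast
  qed
qed

lemma runs_stop: "runs S \<sigma> h hf \<Longrightarrow> all_empty S hf"
  by (induction rule: runs.induct) auto

lemma runs_reach: "runs S \<sigma> h hf \<Longrightarrow> reach S h \<Longrightarrow> validp \<sigma> \<Longrightarrow> reach S hf"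
  by (induction rule: runs.induct) (auto intro: reach_step)

lemma runs_terminate:
  fixes S :: "('a::finite, 'x::finite) menufun"
  assumes "pao S" "reach S h" "validp \<sigma>"
  shows "\<exists>hf. runs S \<sigma> h hf"
  using assms(2)
proof (induction "\<Sum>b\<in>UNIV. card (avail (h b))" arbitrary: h rule: less_induct)
  case less
  show ?case
  proof (cases "all_empty S h")
    case True then show ?thesis using runs.rstop by blast
  next
    case False
    define h' where "h' = step S \<sigma> h"
    have r': "reach S h'" using reach_step[OF less(2) False assms(3)] h'_def by simp
    have le: "card (avail (h' b)) \<le> card (avail (h b))" and lt: "S h b \<noteq> {} \<Longrightarrow> card (avail (h' b)) < card (avail (h b))" for b
    proof -
      have sub: "S h b \<subseteq> avail (h b)" using menu_avail[OF assms(1) less(2)] .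
      show "card (avail (h' b)) < card (avail (h b))" if ne: "S h b \<noteq> {}"
      proof -
        have c: "\<sigma> b (h b) (S h b) \<in> S h b" using assms(3) ne by (auto simp: validp_def valid_strategy_def)
        have "avail (h' b) = S h b - {\<sigma> b (h b) (S h b)}" using ne by (simp add: h'_def step_def avail_append)
        then have "avail (h' b) \<subset> avail (h b)" using c sub by auto
        then show ?thesis by (simp add: psubset_card_mono)
      qed
      show "card (avail (h' b)) \<le> card (avail (h b))"
      proof (cases "S h b = {}")
        case True then show ?thesis by (simp add: h'_def step_def)
      next
        case False then show ?thesis using \<open>S h b \<noteq> {} \<Longrightarrow> _\<close> by simp
      qed
    qed
    obtain b0 where "S h b0 \<noteq> {}" using False by (auto simp: all_empty_def)
    then have "(\<Sum>b\<in>UNIV. card (avail (h' b))) < (\<Sum>b\<in>UNIV. card (avail (h b)))"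
      by (intro sum_strict_mono_ex1) (use le lt in auto)
    then obtain hf where "runs S \<sigma> h' hf" using less(1) r' by blast
    then show ?thesis using runs.rgo False h'_def by blast
  qed
qed



lemma runs_struct:
  assumes "pao S"
  shows "runs S \<sigma> g hf \<Longrightarrow> reach S g \<Longrightarrow> validp \<sigma> \<Longrightarrow>
    \<exists>rest. hf b = g b @ rest \<and> (\<forall>e\<in>set rest. fst e \<subseteq> avail (g b) \<and> fst e \<noteq> {} \<and> (\<exists>k. snd e = \<sigma> b k (fst e)))"
proof (induction rule: runs.induct)
  case (rstop h) then show ?case by auto
next
  case (rgo h hf)
  define h' where "h' = step S \<sigma> h"
  have r': "reach S h'" using reach_step rgo h'_def by blast
  obtain rest where rest: "hf b = h' b @ rest" "\<forall>e\<in>set rest. fst e \<subseteq> avail (h' b) \<and> fst e \<noteq> {} \<and> (\<exists>k. snd e = \<sigma> b k (fst e))"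
    using rgo r' h'_def by blast
  have sub: "S h b \<subseteq> avail (h b)" using menu_avail[OF assms rgo(4)] .
  show ?case
  proof (cases "S h b = {}")
    case True
    then have "h' b = h b" by (simp add: h'_def step_def)
    then show ?thesis using rest by auto
  next
    case False
    define c where "c = \<sigma> b (h b) (S h b)"
    have hb: "h' b = h b @ [(S h b, c)]" using False by (simp add: h'_def step_def c_def)
    have "avail (h' b) \<subseteq> avail (h b)" using hb sub by (auto simp: avail_append)
    then have "\<forall>e\<in>set ((S h b, c) # rest). fst e \<subseteq> avail (h b) \<and> fst e \<noteq> {} \<and> (\<exists>k. snd e = \<sigma> b k (fst e))"
      using rest(2) sub False c_def by auto
    moreover have "hf b = h b @ ((S h b, c) # rest)" using rest(1) hb by simp
    ultimately show ?thesis by blast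
  qed
qed

lemma runs_final_in:
  fixes S :: "('a, 'x) menufun"
  assumes "pao S" "runs S \<sigma> g hf" "reach S g" "validp \<sigma>" "S g a \<noteq> {}"
  shows "finalc hf a \<in> S g a"
proof -
  have ne: "\<not> all_empty S g" using assms(5) by (auto simp: all_empty_def)
  define g' where "g' = step S \<sigma> g"
  have r: "runs S \<sigma> g' hf" using assms(2) ne g'_def by (cases rule: runs.cases) auto
  have r': "reach S g'" using reach_step assms ne g'_def by blast
  define c where "c = \<sigma> a (g a) (S g a)"
  have c: "c \<in> S g a" using assms(4,5) c_def by (auto simp: validp_def valid_strategy_def)
  have ga: "g' a = g a @ [(S g a, c)]" using assms(5) by (simp add: g'_def step_def c_def)
  obtain rest where rest: "hf a = g' a @ rest" "\<forall>e\<in>set rest. fst e \<subseteq> avail (g' a) \<and> fst e \<noteq> {} \<and> (\<exists>k. snd e = \<sigma> a k (fst e))"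
    using runs_struct[OF assms(1) r r' assms(4)] by blast
  show ?thesis
  proof (cases "rest = []")
    case True then show ?thesis using rest ga c by (simp add: finalc_def)
  next
    case False
    then have l: "last rest \<in> set rest" by simp
    then obtain k where "snd (last rest) = \<sigma> a k (fst (last rest))" "fst (last rest) \<noteq> {}" using rest by blast
    then have "snd (last rest) \<in> fst (last rest)" using assms(4) by (auto simp: validp_def valid_strategy_def)
    moreover have "fst (last rest) \<subseteq> S g a" using rest(2) l ga by (auto simp: avail_append)
    ultimately show ?thesis using rest(1) False by (auto simp: finalc_def)
  qed
qed

lemma runs_diverge:
  fixes S :: "('a, 'x) menufun"
  assumes "pao S"
  shows "runs S \<sigma>1 g hf1 \<Longrightarrow> runs S \<sigma>2 g hf2 \<Longrightarrow> reach S g \<Longrightarrow> validp \<sigma>1 \<Longrightarrow> validp \<sigma>2 \<Longrightarrow>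
    (\<forall>b. b \<noteq> a \<longrightarrow> \<sigma>1 b = \<sigma>2 b) \<Longrightarrow>
    finalc hf1 a = finalc hf2 a \<or> (finalc hf1 a \<in> avail (g a) \<and> finalc hf2 a \<in> avail (g a))"
proof (induction arbitrary: hf2 rule: runs.induct)
  case (rstop h)
  from rstop(2) have "hf2 = h" by (cases rule: runs.cases) (use rstop(1) in auto)
  then show ?case by simp
next
  case (rgo h hf)
  show ?case
  proof (cases "S h a = {}")
    case True
    have eq: "step S \<sigma>2 h = step S \<sigma>1 h" unfolding step_def
    proof (rule ext)
      fix b show "(if S h b = {} then h b else h b @ [(S h b, \<sigma>2 b (h b) (S h b))]) =
        (if S h b = {} then h b else h b @ [(S h b, \<sigma>1 b (h b) (S h b))])"
        using True rgo(8) by (cases "b = a") auto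
    qed
    from rgo(4) have r2: "runs S \<sigma>2 (step S \<sigma>1 h) hf2" by (cases rule: runs.cases) (use rgo(1) eq in auto)
    have "reach S (step S \<sigma>1 h)" using reach_step rgo by blast
    then have "finalc hf a = finalc hf2 a \<or> (finalc hf a \<in> avail (step S \<sigma>1 h a) \<and> finalc hf2 a \<in> avail (step S \<sigma>1 h a))"
      using rgo r2 by blast
    moreover have "step S \<sigma>1 h a = h a" using True by (simp add: step_def)
    ultimately show ?thesis by simp
  next
    case False
    have "runs S \<sigma>1 h hf" using rgo(1,2) runs.rgo by blast
    then have "finalc hf a \<in> S h a" "finalc hf2 a \<in> S h a"
      using runs_final_in[OF assms _ rgo(5) _ False] rgo by blast+
    then show ?thesis using menu_avail[OF assms rgo(5)] by blast
  qed
qed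

lemma reach_consistent:
  fixes S :: "('a, 'x::finite) menufun"
  assumes "pao S"
  shows "reach S g \<Longrightarrow> (\<forall>b. \<forall>e\<in>set (g b). best (Q b) (fst e) = snd e) \<Longrightarrow>
     runs S (\<lambda>b. straightforward (Q b)) g hf \<Longrightarrow> runs S (\<lambda>b. straightforward (Q b)) empty_hist hf"
proof (induction rule: reach.induct)
  case init then show ?case by simp
next
  case (move h c)
  let ?g = "\<lambda>a. if S h a = {} then h a else h a @ [(S h a, c a)]"
  have cons: "\<forall>b. \<forall>e\<in>set (h b). best (Q b) (fst e) = snd e"
  proof (intro allI ballI)
    fix b e assume "e \<in> set (h b)"
    then have "e \<in> set (?g b)" by auto
    then show "best (Q b) (fst e) = snd e" using move(5) by blast
  qed
  have "step S (\<lambda>b. straightforward (Q b)) h = ?g"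
  proof (rule ext)
    fix b
    show "step S (\<lambda>b. straightforward (Q b)) h b = ?g b"
    proof (cases "S h b = {}")
      case True then show ?thesis by (simp add: step_def)
    next
      case False
      then have "(S h b, c b) \<in> set (?g b)" by simp
      then have "best (Q b) (S h b) = c b" using move(5) by fastforce
      then show ?thesis using False by (simp add: step_def straightforward_def)
    qed
  qed
  then have "runs S (\<lambda>b. straightforward (Q b)) h hf" using move(6) move(2) runs.rgo by metis
  then show ?case using move(4) cons by blast
qed



lemma pepe_general:
  fixes S :: "('a::finite, 'o::finite option) menufun" and \<phi> :: "('a, 'o) rule"
  assumes pao: "pao S" and seq: "sequentializes S \<phi>" and sp: "strategy_proof \<phi>"
  shows "perfect_ex_post_eq S (\<lambda>a. straightforward)"
  unfolding perfect_ex_post_eq_def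
proof (intro allI impI)
  fix a :: 'a and h :: "('a, 'o option) chistA" and \<sigma>' :: "'o option strategy" and P :: "'a \<Rightarrow> 'o option pref"
  assume rh: "reach S h" and vs: "valid_strategy \<sigma>'" and pr: "profile P"
  define \<Sigma> where "\<Sigma> = (\<lambda>b. straightforward (P b))"
  define \<Sigma>d where "\<Sigma>d = \<Sigma>(a := \<sigma>')"
  have v\<Sigma>: "validp \<Sigma>" using straightforward_validp[OF pr] \<Sigma>_def by simp
  have v\<Sigma>d: "validp \<Sigma>d" using v\<Sigma> vs unfolding \<Sigma>d_def validp_def by auto
  obtain hf0 where r0: "runs S \<Sigma> h hf0" using runs_terminate[OF pao rh v\<Sigma>] by blast
  obtain hf where r1: "runs S \<Sigma>d h hf" using runs_terminate[OF pao rh v\<Sigma>d] by blast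
  have sP: "strict_pref (P b)" for b using pr by (simp add: profile_def)
  define Ph where "Ph = (\<lambda>b. liftp (map snd (h b)) (P b))"
  define Qa where "Qa = liftp (map snd (hf a)) (P a)"
  have prPh: "profile Ph" using liftp_strict sP unfolding profile_def Ph_def by blast
  have sQa: "strict_pref Qa" using liftp_strict sP unfolding Qa_def by blast
  have prQ: "profile (Ph(a := Qa))" using prPh sQa by (simp add: profile_def)
  have chh: "hchain (h b)" for b using reach_inv[OF pao rh] by blast
  have cons_b: "\<forall>e\<in>set (hf' b). best (Ph b) (fst e) = snd e"
    if r: "runs S \<sigma> h hf'" and v: "validp \<sigma>" and sb: "\<sigma> b = straightforward (P b)" for \<sigma> hf' b
  proof
    fix e assume e: "e \<in> set (hf' b)"
    obtain rest where rest: "hf' b = h b @ rest" "\<forall>e\<in>set rest. fst e \<subseteq> avail (h b) \<and> fst e \<noteq> {} \<and> (\<exists>k. snd e = \<sigma> b k (fst e))"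
      using runs_struct[OF pao r rh v] by blast
    show "best (Ph b) (fst e) = snd e"
    proof (cases "e \<in> set (h b)")
      case True then show ?thesis using liftp_consistent[OF sP chh] Ph_def by simp
    next
      case False
      then have er: "e \<in> set rest" using e rest by auto
      then obtain k where k: "snd e = \<sigma> b k (fst e)" "fst e \<subseteq> avail (h b)" using rest by blast
      have "fst e \<inter> set (map snd (h b)) = {}" using k(2) avail_disj'[OF chh] by blast
      then have "best (Ph b) (fst e) = best (P b) (fst e)" unfolding Ph_def by (rule liftp_best_disj)
      then show ?thesis using k sb by (simp add: straightforward_def)
    qed
  qed
  have ph0: "\<phi> Ph = finalc hf0"
  proof -
    have rr: "reach S hf0" using runs_reach[OF r0 rh v\<Sigma>] .
    have st: "runs S (\<lambda>b. straightforward (Ph b)) hf0 hf0" using runs_stop[OF r0] runs.rstop by blast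
    have "\<forall>b. \<forall>e\<in>set (hf0 b). best (Ph b) (fst e) = snd e" using cons_b[OF r0 v\<Sigma>] \<Sigma>_def by simp
    then have "runs S (\<lambda>b. straightforward (Ph b)) empty_hist hf0" using reach_consistent[OF pao rr _ st] by blast
    then show ?thesis using seq prPh runs_outcome unfolding sequentializes_def by metis
  qed
  have ph1: "\<phi> (Ph(a := Qa)) = finalc hf"
  proof -
    have rr: "reach S hf" using runs_reach[OF r1 rh v\<Sigma>d] .
    have st: "runs S (\<lambda>b. straightforward ((Ph(a := Qa)) b)) hf hf" using runs_stop[OF r1] runs.rstop by blast
    have "\<forall>b. \<forall>e\<in>set (hf b). best ((Ph(a := Qa)) b) (fst e) = snd e"
    proof (intro allI)
      fix b show "\<forall>e\<in>set (hf b). best ((Ph(a := Qa)) b) (fst e) = snd e"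
      proof (cases "b = a")
        case True
        have "hchain (hf a)" using reach_inv[OF pao rr] by blast
        then show ?thesis using True liftp_consistent[OF sP] Qa_def by simp
      next
        case False
        then show ?thesis using cons_b[OF r1 v\<Sigma>d] \<Sigma>d_def \<Sigma>_def by simp
      qed
    qed
    then have "runs S (\<lambda>b. straightforward ((Ph(a := Qa)) b)) empty_hist hf" using reach_consistent[OF pao rr _ st] by blast
    then show ?thesis using seq prQ runs_outcome unfolding sequentializes_def by metis
  qed
  have w: "weak (Ph a) (finalc hf0 a) (finalc hf a)"
    using sp prPh sQa ph0 ph1 unfolding strategy_proof_def by metis
  have D: "finalc hf0 a = finalc hf a \<or> (finalc hf0 a \<in> avail (h a) \<and> finalc hf a \<in> avail (h a))"
    using runs_diverge[OF pao r0 r1 rh v\<Sigma> v\<Sigma>d] \<Sigma>d_def by simp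
  have "weak (P a) (finalc hf0 a) (finalc hf a)"
  proof (cases "finalc hf0 a = finalc hf a")
    case True then show ?thesis by (simp add: weak_def)
  next
    case False
    then have "finalc hf0 a \<notin> set (map snd (h a))" "finalc hf a \<notin> set (map snd (h a))"
      using D avail_disj'[OF chh] by blast+
    then show ?thesis using w liftp_disj unfolding weak_def Ph_def by metis
  qed
  then show "weak (P a) (outcome S (\<lambda>b. straightforward (P b)) h a)
                 (outcome S ((\<lambda>b. straightforward (P b))(a := \<sigma>')) h a)"
    using runs_outcome[OF r0] runs_outcome[OF r1] \<Sigma>_def \<Sigma>d_def by simp
qed

lemma partA:
  fixes S :: "('a::finite, 'x::finite) menufun"
  assumes pao: "pao S" and pr: "profile P"
  shows "runs S (\<lambda>b. straightforward (P b)) g hf \<Longrightarrow> reach S g \<Longrightarrow> finalc hf \<noteq> \<mu> \<Longrightarrow>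
    \<exists>a. \<forall>P'\<in>lower_set P \<mu>. outcome S (\<lambda>b. straightforward (P' b)) g a \<noteq> \<mu> a"
proof (induction rule: runs.induct)
  case (rstop h)
  then obtain a where a: "finalc h a \<noteq> \<mu> a" by auto
  have "outcome S (\<lambda>b. straightforward (P' b)) h = finalc h" for P'
    using runs_outcome runs.rstop[OF rstop(1)] by metis
  then show ?case using a by metis
next
  case (rgo h hf)
  have sP: "strict_pref (P b)" for b using pr by (simp add: profile_def)
  have vP': "validp (\<lambda>b. straightforward (P' b))" and sP': "strict_pref (P' b)" 
    and ag: "agrees_above (P b) (\<mu> b) (P' b)" if "P' \<in> lower_set P \<mu>" for P' b
    using that straightforward_validp by (auto simp: lower_set_def profile_def)
  show ?case
  proof (cases "\<exists>a. S h a \<noteq> {} \<and> (\<forall>y\<in>S h a. P a (\<mu> a) y)")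
    case True
    then obtain a where a: "S h a \<noteq> {}" "\<forall>y\<in>S h a. P a (\<mu> a) y" by blast
    have "outcome S (\<lambda>b. straightforward (P' b)) h a \<noteq> \<mu> a" if L: "P' \<in> lower_set P \<mu>" for P'
    proof -
      obtain hf' where r: "runs S (\<lambda>b. straightforward (P' b)) h hf'" using runs_terminate[OF pao rgo(4) vP'[OF L]] by blast
      have "finalc hf' a \<in> S h a" using runs_final_in[OF pao r rgo(4) vP'[OF L] a(1)] .
      then have "P a (\<mu> a) (finalc hf' a)" using a by blast
      then show ?thesis using runs_outcome[OF r] sp_irrefl[OF sP] by metis
    qed
    then show ?thesis by blast
  next
    case False
    define h' where "h' = step S (\<lambda>b. straightforward (P b)) h"
    have vP: "validp (\<lambda>b. straightforward (P b))" using straightforward_validp[OF pr] .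
    have rh': "reach S h'" using reach_step[OF rgo(4) rgo(1) vP] h'_def by simp
    obtain a where a: "\<forall>P'\<in>lower_set P \<mu>. outcome S (\<lambda>b. straightforward (P' b)) h' a \<noteq> \<mu> a"
      using rgo(3)[OF _ rgo(5)] rh' h'_def by blast
    have "outcome S (\<lambda>b. straightforward (P' b)) h a \<noteq> \<mu> a" if L: "P' \<in> lower_set P \<mu>" for P'
    proof -
      have "step S (\<lambda>b. straightforward (P' b)) h = h'"
        unfolding h'_def step_def
      proof (rule ext)
        fix b
        show "(if S h b = {} then h b else h b @ [(S h b, straightforward (P' b) (h b) (S h b))]) =
              (if S h b = {} then h b else h b @ [(S h b, straightforward (P b) (h b) (S h b))])"
        proof (cases "S h b = {}")
          case True then show ?thesis by simp
        next
          case ne: False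
          then obtain y where y: "y \<in> S h b" "\<not> P b (\<mu> b) y" using False by blast
          then have "y = \<mu> b \<or> P b y (\<mu> b)" using sp_total[OF sP] by blast
          then have "best (P' b) (S h b) = best (P b) (S h b)"
            using best_agree[OF sP sP'[OF L] ag[OF L] finite] y(1) by blast
          then show ?thesis by (simp add: straightforward_def)
        qed
      qed
      moreover obtain hf' where r: "runs S (\<lambda>b. straightforward (P' b)) h' hf'"
        using runs_terminate[OF pao rh' vP'[OF L]] by blast
      ultimately have "runs S (\<lambda>b. straightforward (P' b)) h hf'" using runs.rgo rgo(1) by metis
      then have "outcome S (\<lambda>b. straightforward (P' b)) h = outcome S (\<lambda>b. straightforward (P' b)) h'"
        using runs_outcome r by metis
      then show ?thesis using a L by simp
    qed
    then show ?thesis by blast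
  qed
qed



definition prefix_of :: "'x pref \<Rightarrow> 'x list \<Rightarrow> bool" where
  "prefix_of Q cs \<longleftrightarrow> sorted_wrt Q cs \<and> (\<forall>c\<in>set cs. \<forall>y. y \<notin> set cs \<longrightarrow> Q c y)"

lemma set_butlast_last: "cs \<noteq> [] \<Longrightarrow> set cs = insert (last cs) (set (butlast cs))"
  by (induction cs) auto

lemma prefix_upper:
  assumes s: "strict_pref Q" and p: "prefix_of Q cs" and ne: "cs \<noteq> []"
  shows "{y. Q y (last cs)} = set (butlast cs)"
proof
  have "sorted_wrt Q (butlast cs @ [last cs])" using p ne by (simp add: prefix_of_def)
  then show "set (butlast cs) \<subseteq> {y. Q y (last cs)}" by (auto simp: sorted_wrt_append)
  show "{y. Q y (last cs)} \<subseteq> set (butlast cs)"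
  proof
    fix y assume y: "y \<in> {y. Q y (last cs)}"
    have lin: "last cs \<in> set cs" using ne by simp
    have "y \<in> set cs"
    proof (rule ccontr)
      assume "y \<notin> set cs"
      then have "Q (last cs) y" using p lin by (auto simp: prefix_of_def)
      then show False using y sp_asym[OF s] by auto
    qed
    moreover have "y \<noteq> last cs" using y sp_irrefl[OF s] by auto
    ultimately show "y \<in> set (butlast cs)" using set_butlast_last[OF ne] by auto
  qed
qed

lemma prefix_agree:
  assumes s: "strict_pref P" and s': "strict_pref P'" and p: "prefix_of P cs" and p': "prefix_of P' cs" and ne: "cs \<noteq> []"
  shows "agrees_above P (last cs) P'"
  unfolding agrees_above_def
proof (intro conjI allI impI)
  show "{y. P' y (last cs)} = {y. P y (last cs)}" using prefix_upper[OF s p ne] prefix_upper[OF s' p' ne] by simp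
  have ins: "insert (last cs) {w. P w (last cs)} = set cs" using prefix_upper[OF s p ne] set_butlast_last[OF ne] by simp
  fix y z assume "y \<in> insert (last cs) {w. P w (last cs)}" "z \<in> insert (last cs) {w. P w (last cs)}"
  then have "y \<in> set cs" "z \<in> set cs" using ins by auto
  then obtain i j where ij: "i < length cs" "j < length cs" "y = cs ! i" "z = cs ! j" by (metis in_set_conv_nth)
  have sw: "\<And>i j. i < j \<Longrightarrow> j < length cs \<Longrightarrow> P (cs!i) (cs!j)" "\<And>i j. i < j \<Longrightarrow> j < length cs \<Longrightarrow> P' (cs!i) (cs!j)"
    using p p' by (auto simp: prefix_of_def sorted_wrt_iff_nth_less)
  consider "i < j" | "i = j" | "j < i" by linarith
  then show "P' y z = P y z"
  proof cases
    case 1 then show ?thesis using sw ij by auto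
  next
    case 2 then show ?thesis using ij sp_irrefl[OF s] sp_irrefl[OF s'] by auto
  next
    case 3
    then have "P z y" "P' z y" using sw ij by auto
    then show ?thesis using sp_asym[OF s] sp_asym[OF s'] by blast
  qed
qed

lemma prefix_snoc:
  fixes P :: "('x::finite) pref"
  assumes s: "strict_pref P" and p: "prefix_of P cs" and ne: "UNIV - set cs \<noteq> {}"
  shows "prefix_of P (cs @ [best P (UNIV - set cs)])"
proof -
  define c where "c = best P (UNIV - set cs)"
  have c: "c \<in> UNIV - set cs" "\<forall>y\<in>UNIV - set cs. y \<noteq> c \<longrightarrow> P c y"
    using best_in[OF s _ ne] c_def by auto
  have "sorted_wrt P (cs @ [c])" using p c by (auto simp: prefix_of_def sorted_wrt_append)
  moreover have "\<forall>d\<in>set (cs @ [c]). \<forall>y. y \<notin> set (cs @ [c]) \<longrightarrow> P d y"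
    using p c by (auto simp: prefix_of_def)
  ultimately show ?thesis unfolding prefix_of_def c_def by blast
qed

definition mech :: "('a, 'o) rule \<Rightarrow> ('a, 'o option) menufun" where
  "mech \<phi> h a = (if h = empty_hist then UNIV
     else if h a \<noteq> [] \<and> (\<forall>P'. profile P' \<and> (\<forall>b. prefix_of (P' b) (map snd (h b))) \<longrightarrow> \<phi> P' a \<noteq> snd (last (h a)))
     then avail (h a) else {})"

lemma mech_pao: "pao (mech \<phi>)"
  unfolding pao_def by (auto simp: mech_def avail_def)

lemma mech_seq:
  fixes \<phi> :: "('a::finite, 'o::finite) rule"
  assumes md: "monotonic_discoverability \<phi>"
  shows "sequentializes (mech \<phi>) \<phi>"
  unfolding sequentializes_def
proof (intro allI impI)
  fix P :: "'a \<Rightarrow> 'o option pref" assume pr: "profile P"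
  let ?S = "mech \<phi>"
  let ?\<Sigma> = "\<lambda>b. straightforward (P b)"
  have sP: "strict_pref (P b)" for b using pr by (simp add: profile_def)
  have v: "validp ?\<Sigma>" using straightforward_validp[OF pr] .
  obtain hf where r: "runs ?S ?\<Sigma> empty_hist hf" using runs_terminate[OF mech_pao reach.init v] by blast
  define J where "J g \<longleftrightarrow> g = empty_hist \<or> (\<forall>b. g b \<noteq> [] \<and> prefix_of (P b) (map snd (g b)) \<and>
      avail (g b) = UNIV - set (map snd (g b)) \<and> \<phi> P b \<notin> set (butlast (map snd (g b))))" for g
  have stepJ: "J (step ?S ?\<Sigma> g)" if Jg: "J g" for g
  proof (cases "g = empty_hist")
    case True
    have "step ?S ?\<Sigma> g b = [(UNIV, best (P b) UNIV)]" for b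
      using True by (simp add: step_def mech_def straightforward_def empty_hist_def)
    moreover have "prefix_of (P b) [best (P b) UNIV]" for b
      using prefix_snoc[OF sP[of b], of "[]"] by (simp add: prefix_of_def)
    ultimately show ?thesis unfolding J_def by (simp add: avail_def)
  next
    case False
    then have Jb: "\<forall>b. g b \<noteq> [] \<and> prefix_of (P b) (map snd (g b)) \<and>
      avail (g b) = UNIV - set (map snd (g b)) \<and> \<phi> P b \<notin> set (butlast (map snd (g b)))" using Jg J_def by blast
    have "g' b \<noteq> [] \<and> prefix_of (P b) (map snd (g' b)) \<and>
      avail (g' b) = UNIV - set (map snd (g' b)) \<and> \<phi> P b \<notin> set (butlast (map snd (g' b)))"
      if g': "g' = step ?S ?\<Sigma> g" for g' b
    proof (cases "?S g b = {}")
      case True then show ?thesis using Jb g' by (simp add: step_def)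
    next
      case ne: False
      define cs where "cs = map snd (g b)"
      have gb: "g b \<noteq> []" "prefix_of (P b) cs" "avail (g b) = UNIV - set cs" "\<phi> P b \<notin> set (butlast cs)"
        using Jb cs_def by auto
      have sel: "\<forall>P'. profile P' \<and> (\<forall>b. prefix_of (P' b) (map snd (g b))) \<longrightarrow> \<phi> P' b \<noteq> snd (last (g b))"
        and Sg: "?S g b = avail (g b)" using ne False by (auto simp: mech_def split: if_splits)
      have "\<phi> P b \<noteq> last cs" using sel pr Jb gb(1) cs_def by (simp add: last_map)
      then have nin: "\<phi> P b \<notin> set cs" using gb set_butlast_last[of cs] cs_def by auto
      define c where "c = best (P b) (UNIV - set cs)"
      have gb': "g' b = g b @ [(UNIV - set cs, c)]" using g' ne Sg gb(3)
        by (simp add: step_def straightforward_def c_def)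
      have "prefix_of (P b) (cs @ [c])" using prefix_snoc[OF sP gb(2)] ne Sg gb(3) c_def by simp
      then show ?thesis using gb' nin cs_def by (auto simp: avail_append)
    qed
    then show ?thesis unfolding J_def by blast
  qed
  have "J g \<Longrightarrow> finalc hf = \<phi> P" if "runs ?S ?\<Sigma> g hf" for g
    using that
  proof (induction rule: runs.induct)
    case (rstop h)
    have hne: "h \<noteq> empty_hist" using rstop(1) by (auto simp: all_empty_def mech_def)
    then have Jb: "\<forall>b. h b \<noteq> [] \<and> prefix_of (P b) (map snd (h b)) \<and>
      avail (h b) = UNIV - set (map snd (h b)) \<and> \<phi> P b \<notin> set (butlast (map snd (h b)))" using rstop(2) J_def by blast
    define x where "x = finalc h"
    have xb: "x b = last (map snd (h b))" for b using Jb by (simp add: x_def finalc_def last_map)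
    show ?case
    proof (rule ccontr)
      assume "finalc h \<noteq> \<phi> P"
      then obtain a where a: "\<forall>P'\<in>lower_set P x. \<phi> P' a \<noteq> x a" using md pr x_def
        unfolding monotonic_discoverability_def by metis
      have "\<phi> P' a \<noteq> snd (last (h a))" if "profile P'" "\<forall>b. prefix_of (P' b) (map snd (h b))" for P'
      proof -
        have "agrees_above (P b) (x b) (P' b)" for b
          using prefix_agree[OF sP _ _ that(2)[rule_format, of b]] that(1) Jb xb by (simp add: profile_def)
        then have "P' \<in> lower_set P x" using that(1) by (simp add: lower_set_def)
        then show ?thesis using a xb Jb by (simp add: last_map)
      qed
      then have "mech \<phi> h a = avail (h a)" using hne Jb by (simp add: mech_def)
      then have "avail (h a) = {}" using rstop(1) by (simp add: all_empty_def)
      then have U: "set (map snd (h a)) = UNIV" using Jb by auto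
      have "agrees_above (P b) (x b) (P b)" for b by (simp add: agrees_above_def)
      then have "P \<in> lower_set P x" using pr by (simp add: lower_set_def)
      then have "\<phi> P a \<noteq> last (map snd (h a))" using a xb by simp
      then have "\<phi> P a \<notin> set (map snd (h a))" using Jb set_butlast_last[of "map snd (h a)"] by auto
      then show False using U by simp
    qed
  next
    case (rgo h hf)
    then show ?case using stepJ by blast
  qed
  then have "finalc hf = \<phi> P" using r J_def by blast
  then show "outcome ?S ?\<Sigma> empty_hist = \<phi> P" using runs_outcome[OF r] by simp
qed



theorem theorem2:
  fixes \<phi> :: "('a::finite, 'o::finite) rule"
  assumes "individually_rational \<phi>"
  shows "(pao_implementable_pepe \<phi> \<longleftrightarrow> strategy_proof \<phi> \<and> monotonic_discoverability \<phi>)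
    \<and> (pao_implementable_pepe \<phi> \<longrightarrow>
        (\<forall>S :: ('a, 'o option) menufun. pao S \<and> sequentializes S \<phi> \<longrightarrow>
            perfect_ex_post_eq S (\<lambda>a. straightforward)))"
proof -
  have fwd: "strategy_proof \<phi> \<and> monotonic_discoverability \<phi>" if imp: "pao_implementable_pepe \<phi>"
  proof
    obtain S :: "('a, 'o option) menufun" where S: "pao S" "sequentializes S \<phi>" "perfect_ex_post_eq S (\<lambda>a. straightforward)"
      using imp unfolding pao_implementable_pepe_def by blast
    show "strategy_proof \<phi>"
      unfolding strategy_proof_def
    proof (intro allI impI)
      fix P :: "'a \<Rightarrow> 'o option pref" and a :: 'a and Pa' :: "'o option pref"
      assume pr: "profile P" and sPa: "strict_pref Pa'"
      have w: "weak (P a) (outcome S (\<lambda>b. straightforward (P b)) empty_hist a)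
                 (outcome S ((\<lambda>b. straightforward (P b))(a := straightforward Pa')) empty_hist a)"
        using S(3) reach.init straightforward_valid[OF sPa] pr unfolding perfect_ex_post_eq_def by blast
      have eq: "(\<lambda>b. straightforward (P b))(a := straightforward Pa') = (\<lambda>b. straightforward ((P(a := Pa')) b))"
        by (rule ext) simp
      have pr': "profile (P(a := Pa'))" using pr sPa by (simp add: profile_def)
      show "weak (P a) (\<phi> P a) (\<phi> (P(a := Pa')) a)"
        using w S(2) pr pr' unfolding eq sequentializes_def by metis
    qed
    show "monotonic_discoverability \<phi>"
      unfolding monotonic_discoverability_def
    proof (intro allI impI)
      fix \<mu> :: "'a \<Rightarrow> 'o option" and P :: "'a \<Rightarrow> 'o option pref"
      assume pr: "profile P"
      show "\<phi> P = \<mu> \<or> (\<exists>a. \<forall>P'\<in>lower_set P \<mu>. \<phi> P' a \<noteq> \<mu> a)"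
      proof (cases "\<phi> P = \<mu>")
        case True then show ?thesis by simp
      next
        case False
        obtain hf where r: "runs S (\<lambda>b. straightforward (P b)) empty_hist hf"
          using runs_terminate[OF S(1) reach.init straightforward_validp[OF pr]] by blast
        have "finalc hf = \<phi> P" using runs_outcome[OF r] S(2) pr unfolding sequentializes_def by metis
        then obtain a where a: "\<forall>P'\<in>lower_set P \<mu>. outcome S (\<lambda>b. straightforward (P' b)) empty_hist a \<noteq> \<mu> a"
          using partA[OF S(1) pr r reach.init] False by metis
        have "\<forall>P'\<in>lower_set P \<mu>. \<phi> P' a \<noteq> \<mu> a"
        proof
          fix P' assume L: "P' \<in> lower_set P \<mu>"
          then have "profile P'" by (simp add: lower_set_def)
          then show "\<phi> P' a \<noteq> \<mu> a" using a L S(2) unfolding sequentializes_def by metis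
        qed
        then show ?thesis by blast
      qed
    qed
  qed
  have bwd: "pao_implementable_pepe \<phi>" if "strategy_proof \<phi>" "monotonic_discoverability \<phi>"
    unfolding pao_implementable_pepe_def
    using mech_pao mech_seq[OF that(2)] pepe_general[OF mech_pao mech_seq[OF that(2)] that(1)] by blast
  show ?thesis
    using fwd bwd pepe_general by blast
qed


end
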